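(* Let $\mathcal S$ be a signed group and let $\mathbf e=(e_1,e_2,\dots)$ be a basic sequence in $\mathcal S$ (finite or countably infinite). Let $C=[c_{jk}]$ with $c_{jk}=c(e_j,e_k)$ be its AC-matrix (so $c_{jj}=1$) and let $D=[d_{jk}]$, $d_{jk}=(1-c_{jk})/2\in\{0,1\}$. Then for all finitary $0$-$1$ sequences $\mathbf p,\mathbf q$, \[ \mathbf e^{\mathbf p}\,\mathbf e^{\mathbf q}=(-1)^{\sum_{j\ge1}\sum_{k>j} d_{jk}\,p_k\,q_j}\;\mathbf e^{\mathbf p+\mathbf q}, \qquad \mathbf e^{\mathbf p+\mathbf q}:=\prod_{n} e_n^{p_n+q_n}\ \text{(ordered by increasing $n$)} . \] Moreover, writing $\langle\mathbf p\rangle=\sum_n p_n$ and $\mathbf p\mathbf q=(p_nq_n)$: (1) $\mathbf e^{\mathbf p}\circ\mathbf e^{\mathbf q}=(-1)^{(\langle C\mathbf p,\mathbf q\rangle-\langle\mathbf p\rangle\langle\mathbf q\rangle)/2}$; (2) if $\mathbf e$ is anticommutative, $\mathbf e^{\mathbf p}\circ\mathbf e^{\mathbf q}=(-1)^{\langle\mathbf p\rangle\langle\mathbf q\rangle-\langle\mathbf p\mathbf q\rangle}$; (3) if $\mathcal G\subset\mathcal S$ is a subgroup generated by a basic sequence of length at least $2$ such that any two elements of $\mathcal G\setminus\{\pm1\}$ that are not equal up to sign anticommute, then the generating sequence has length exactly $2$, i.e. $\mathcal G$ has order $8$; (4) if $\mathbf e$ is anticommutative and $p=\langle\mathbf p\rangle$,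 then the signature of $\mathbf e^{\mathbf p}$ is $(\mathbf e^{\mathbf p})^2=\big(\prod_n e_n^{2p_n}\big)(-1)^{p(p-1)/2}$; in particular, if $\mathbf e$ is positive then $\mathbf e^{\mathbf p}$ is negative iff $p\equiv 2$ or $p\equiv 3 \pmod 4$, and if $\mathbf e$ is negative then $\mathbf e^{\mathbf p}$ is negative iff $p\equiv 2$ or $p\equiv1\pmod 4$; (5) for an anticommutative $\mathbf e$ of length $n$, let $s_+$ (resp. $s_-$) denote the number of negative elements among $\{\mathbf e^{\mathbf p}:\mathbf p\in\{0,1\}^n\}$ when $\mathbf e$ is positive (resp. negative). Then $s_+=b_2+b_3$ and $s_-=b_1+b_2$, where $b_q=\sum_{j\ge0,\ q+4j\le n}\binom{n}{q+4j}$.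
   Context: A signed group is a group $\mathcal S$ containing a central element $-1\neq1$ with $(-1)^2=1$ such that any two elements $e,f$ either commute ($ef=fe$) or anticommute ($ef=-fe$), and every element $e$ has signature $e^2\in\{1,-1\}$; $e$ is positive if $e^2=1$ and negative if $e^2=-1$, and a sequence is positive/negative (pure) if all its elements are. The commutativity function is $c(e,f)=e\circ f=1$ if $ef=fe$ and $-1$ if $ef=-fe$. For a sequence $\mathbf e=(e_n)$ and a finitary $0$-$1$ sequence $\mathbf p$ (i.e. $p_n\in\{0,1\}$, $p_n=0$ eventually), $\mathbf e^{\mathbf p}=e_1^{p_1}e_2^{p_2}\cdots$ with $e^0=1$, $e^1=e$. A sequence is basic if no $\mathbf e^{\mathbf p}$ with $\mathbf p\neq\mathbf 0$ equals $\pm1$. A sequence is anticommutative if any two distinct terms anticommute. *)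

theory Defs
  imports "HOL-Algebra.Algebra"
begin

text \<open>A signed group: a group G with a distinguished central element m (playing the role
of -1), m \<noteq> 1, m^2 = 1, any two elements commute or anticommute, and every element
squares to 1 or m.\<close>
definition signed_group :: "('a, 'b) monoid_scheme \<Rightarrow> 'a \<Rightarrow> bool" where
  "signed_group G m \<longleftrightarrow> group G \<and> m \<in> carrier G \<and> m \<noteq> \<one>\<^bsub>G\<^esub> \<and> m \<otimes>\<^bsub>G\<^esub> m = \<one>\<^bsub>G\<^esub>
     \<and> (\<forall>x\<in>carrier G. m \<otimes>\<^bsub>G\<^esub> x = x \<otimes>\<^bsub>G\<^esub> m)
     \<and> (\<forall>x\<in>carrier G. \<forall>y\<in>carrier G. x \<otimes>\<^bsub>G\<^esub> y = y \<otimes>\<^bsub>G\<^esub> x \<or> x \<otimes>\<^bsub>G\<^esub> y = m \<otimes>\<^bsub>G\<^esub> (y \<otimes>\<^bsub>G\<^esub> x))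
     \<and> (\<forall>x\<in>carrier G. x \<otimes>\<^bsub>G\<^esub> x = \<one>\<^bsub>G\<^esub> \<or> x \<otimes>\<^bsub>G\<^esub> x = m)"

definition comm_fun :: "('a, 'b) monoid_scheme \<Rightarrow> 'a \<Rightarrow> 'a \<Rightarrow> int" where
  "comm_fun G x y = (if x \<otimes>\<^bsub>G\<^esub> y = y \<otimes>\<^bsub>G\<^esub> x then 1 else -1)"

definition neg1pow :: "int \<Rightarrow> int" where
  "neg1pow k = (if even k then 1 else -1)"

text \<open>Index set of a sequence: finite {0..<L} or all of nat (0-based indexing).\<close>
definition seq_index :: "nat set \<Rightarrow> bool" where
  "seq_index I \<longleftrightarrow> I = UNIV \<or> (\<exists>L. I = {..<L})"

definition finitary01 :: "nat set \<Rightarrow> (nat \<Rightarrow> nat) \<Rightarrow> bool" where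
  "finitary01 I p \<longleftrightarrow> (\<forall>n. p n \<in> {0, 1}) \<and> finite {n. p n \<noteq> 0} \<and> (\<forall>n. n \<notin> I \<longrightarrow> p n = 0)"

primrec ordprod :: "('a, 'b) monoid_scheme \<Rightarrow> (nat \<Rightarrow> 'a) \<Rightarrow> nat \<Rightarrow> 'a" where
  "ordprod G f 0 = \<one>\<^bsub>G\<^esub>"
| "ordprod G f (Suc N) = ordprod G f N \<otimes>\<^bsub>G\<^esub> f N"

definition seq_pow :: "('a, 'b) monoid_scheme \<Rightarrow> (nat \<Rightarrow> 'a) \<Rightarrow> (nat \<Rightarrow> nat) \<Rightarrow> 'a" where
  "seq_pow G e p = ordprod G (\<lambda>n. e n [^]\<^bsub>G\<^esub> p n) (LEAST N. \<forall>n\<ge>N. p n = 0)"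

definition basic_seq :: "('a, 'b) monoid_scheme \<Rightarrow> 'a \<Rightarrow> (nat \<Rightarrow> 'a) \<Rightarrow> nat set \<Rightarrow> bool" where
  "basic_seq G m e I \<longleftrightarrow> (\<forall>p. finitary01 I p \<and> p \<noteq> (\<lambda>_. 0) \<longrightarrow>
      seq_pow G e p \<noteq> \<one>\<^bsub>G\<^esub> \<and> seq_pow G e p \<noteq> m)"

definition anticomm_seq :: "('a, 'b) monoid_scheme \<Rightarrow> 'a \<Rightarrow> (nat \<Rightarrow> 'a) \<Rightarrow> nat set \<Rightarrow> bool" where
  "anticomm_seq G m e I \<longleftrightarrow> (\<forall>j\<in>I. \<forall>k\<in>I. j \<noteq> k \<longrightarrow> e j \<otimes>\<^bsub>G\<^esub> e k = m \<otimes>\<^bsub>G\<^esub> (e k \<otimes>\<^bsub>G\<^esub> e j))"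

definition positive_seq :: "('a, 'b) monoid_scheme \<Rightarrow> (nat \<Rightarrow> 'a) \<Rightarrow> nat set \<Rightarrow> bool" where
  "positive_seq G e I \<longleftrightarrow> (\<forall>n\<in>I. e n \<otimes>\<^bsub>G\<^esub> e n = \<one>\<^bsub>G\<^esub>)"

definition negative_seq :: "('a, 'b) monoid_scheme \<Rightarrow> 'a \<Rightarrow> (nat \<Rightarrow> 'a) \<Rightarrow> nat set \<Rightarrow> bool" where
  "negative_seq G m e I \<longleftrightarrow> (\<forall>n\<in>I. e n \<otimes>\<^bsub>G\<^esub> e n = m)"

definition bsum :: "nat \<Rightarrow> nat \<Rightarrow> nat" where
  "bsum n q = (\<Sum>j\<in>{j. q + 4 * j \<le> n}. n choose (q + 4 * j))"

end

theory Submission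
  imports Defs
begin

definition sgnel :: "('a, 'b) monoid_scheme \<Rightarrow> 'a \<Rightarrow> int \<Rightarrow> 'a" where
  "sgnel G m k = (if even k then \<one>\<^bsub>G\<^esub> else m)"

locale sgrp = group G for G :: "('a, 'b) monoid_scheme" (structure) +
  fixes m :: 'a
  assumes m_in[simp]: "m \<in> carrier G" and m_ne: "m \<noteq> \<one>" and mm: "m \<otimes> m = \<one>"
    and m_c: "x \<in> carrier G \<Longrightarrow> m \<otimes> x = x \<otimes> m"
    and ca: "x \<in> carrier G \<Longrightarrow> y \<in> carrier G \<Longrightarrow> x \<otimes> y = y \<otimes> x \<or> x \<otimes> y = m \<otimes> (y \<otimes> x)"
    and sq: "x \<in> carrier G \<Longrightarrow> x \<otimes> x = \<one> \<or> x \<otimes> x = m"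

lemma sgrpI: "signed_group G m \<Longrightarrow> sgrp G m"
  unfolding signed_group_def sgrp_def sgrp_axioms_def by blast

lemma card_mod4:
  assumes q: "q < 4"
  shows "card {A. A \<subseteq> {..<n} \<and> card A mod 4 = q} = bsum n q"
proof -
  have eq: "{A. A \<subseteq> {..<n} \<and> card A mod 4 = q} = (\<Union>j\<in>{j. q + 4*j \<le> n}. {A. A \<subseteq> {..<n} \<and> card A = q + 4*j})"
  proof (intro equalityI subsetI)
    fix A assume "A \<in> {A. A \<subseteq> {..<n} \<and> card A mod 4 = q}"
    then have A: "A \<subseteq> {..<n}" "card A mod 4 = q" by auto
    have "card A \<le> n" using card_mono[OF _ A(1)] by simp
    moreover have "card A = q + 4 * (card A div 4)" using A(2) mod_mult_div_eq[of "card A" 4] by simp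
    ultimately show "A \<in> (\<Union>j\<in>{j. q + 4*j \<le> n}. {A. A \<subseteq> {..<n} \<and> card A = q + 4*j})"
      using A(1) by (intro UN_I[of "card A div 4"]) auto
  next
    fix A assume "A \<in> (\<Union>j\<in>{j. q + 4*j \<le> n}. {A. A \<subseteq> {..<n} \<and> card A = q + 4*j})"
    then show "A \<in> {A. A \<subseteq> {..<n} \<and> card A mod 4 = q}" using q by auto
  qed
  have fin: "finite {j. q + 4*j \<le> (n::nat)}" by (rule finite_subset[of _ "{..n}"]) auto
  have "card (\<Union>j\<in>{j. q + 4*j \<le> n}. {A. A \<subseteq> {..<n} \<and> card A = q + 4*j})
      = (\<Sum>j\<in>{j. q + 4*j \<le> n}. card {A. A \<subseteq> {..<n} \<and> card A = q + 4*j})"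
    by (rule card_UN_disjoint[OF fin]) auto
  also have "\<dots> = (\<Sum>j\<in>{j. q + 4*j \<le> n}. n choose (q + 4*j))"
    by (rule sum.cong) (simp_all add: n_subsets)
  finally show ?thesis unfolding eq bsum_def .
qed

lemma card_mod4_2:
  assumes "q1 < 4" "q2 < 4" "q1 \<noteq> q2"
  shows "card {A. A \<subseteq> {..<n} \<and> (card A mod 4 = q1 \<or> card A mod 4 = q2)} = bsum n q1 + bsum n q2"
proof -
  have "{A. A \<subseteq> {..<n} \<and> (card A mod 4 = q1 \<or> card A mod 4 = q2)}
     = {A. A \<subseteq> {..<n} \<and> card A mod 4 = q1} \<union> {A. A \<subseteq> {..<n} \<and> card A mod 4 = q2}" by auto
  moreover have "finite {A. A \<subseteq> {..<n} \<and> card A mod 4 = q}" for q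
    by (rule finite_subset[of _ "Pow {..<n}"]) auto
  ultimately show ?thesis using card_mod4[OF assms(1)] card_mod4[OF assms(2)] assms(3)
    by (simp add: card_Un_disjoint disjoint_iff)
qed

lemma supp_bij:
  "card {p. finitary01 {..<n} p \<and> Q (card {k. p k \<noteq> 0})} = card {A. A \<subseteq> {..<n} \<and> Q (card A)}"
proof (rule bij_betw_same_card[of "\<lambda>p. {k. p k \<noteq> 0}"])
  show "bij_betw (\<lambda>p. {k. p k \<noteq> 0}) {p. finitary01 {..<n} p \<and> Q (card {k. p k \<noteq> 0})}
      {A. A \<subseteq> {..<n} \<and> Q (card A)}"
  proof (rule bij_betwI')
    fix p p' assume "p \<in> {p. finitary01 {..<n} p \<and> Q (card {k. p k \<noteq> 0})}"
      "p' \<in> {p. finitary01 {..<n} p \<and> Q (card {k. p k \<noteq> 0})}"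
    then have v: "p k = 0 \<or> p k = 1" "p' k = 0 \<or> p' k = 1" for k unfolding finitary01_def by auto
    show "({k. p k \<noteq> 0} = {k. p' k \<noteq> 0}) = (p = p')"
    proof
      assume h: "{k. p k \<noteq> 0} = {k. p' k \<noteq> 0}"
      show "p = p'"
      proof
        fix k have "p k \<noteq> 0 \<longleftrightarrow> p' k \<noteq> 0" using h by blast
        then show "p k = p' k" using v[of k] by auto
      qed
    qed simp
  next
    fix p assume "p \<in> {p. finitary01 {..<n} p \<and> Q (card {k. p k \<noteq> 0})}"
    then show "{k. p k \<noteq> 0} \<in> {A. A \<subseteq> {..<n} \<and> Q (card A)}" unfolding finitary01_def by auto
  next
    fix A assume A: "A \<in> {A. A \<subseteq> {..<n} \<and> Q (card A)}"
    then have fA: "finite A" using finite_subset by blast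
    have e: "{k. (if k \<in> A then 1 else 0::nat) \<noteq> 0} = A" by auto
    have "(\<lambda>k. if k \<in> A then 1 else 0::nat) \<in> {p. finitary01 {..<n} p \<and> Q (card {k. p k \<noteq> 0})}"
      using A fA unfolding finitary01_def e by auto
    then show "\<exists>p\<in>{p. finitary01 {..<n} p \<and> Q (card {k. p k \<noteq> 0})}. A = {k. p k \<noteq> 0}"
      using e by (intro bexI[of _ "\<lambda>k. if k \<in> A then 1 else 0::nat"]) auto
  qed
qed


context sgrp begin

abbreviation sg where "sg k \<equiv> sgnel G m k"

lemma sg_in[simp]: "sg k \<in> carrier G"
  by (simp add: sgnel_def)

lemma sg_add: "sg (a + b) = sg a \<otimes> sg b"
  by (auto simp: sgnel_def mm)

lemma sg_c: "x \<in> carrier G \<Longrightarrow> sg k \<otimes> x = x \<otimes> sg k"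
  by (auto simp: sgnel_def m_c)

lemma sg_c2: "x \<in> carrier G \<Longrightarrow> y \<in> carrier G \<Longrightarrow> x \<otimes> (sg k \<otimes> y) = sg k \<otimes> (x \<otimes> y)"
  by (metis m_assoc sg_c sg_in)

lemma sg_sq: "sg k \<otimes> sg k = \<one>"
  by (auto simp: sgnel_def mm)

lemma sg_one_iff: "sg k = \<one> \<longleftrightarrow> even k"
  using m_ne by (auto simp: sgnel_def)

lemma sg_m_iff: "sg k = m \<longleftrightarrow> odd k"
  using m_ne by (auto simp: sgnel_def)

lemma sg_0[simp]: "sg 0 = \<one>" and sg_1: "sg 1 = m"
  by (auto simp: sgnel_def)

lemma m_nat_pow: "m [^] (k::nat) = sg (int k)"
  by (induction k) (auto simp: sgnel_def mm)

lemma m_int_pow: "m [^] (k::int) = sg k"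
proof (cases "k < 0")
  case True
  then have "m [^] k = inv (sg (int (nat (-k))))" by (simp add: int_pow_def2 m_nat_pow)
  also have "\<dots> = sg (int (nat (-k)))" using sg_sq by (simp add: inv_char)
  finally show ?thesis using True by (simp add: sgnel_def)
next
  case False
  then show ?thesis by (simp add: int_pow_def2 m_nat_pow)
qed

lemma sg_cancel: "x \<in> carrier G \<Longrightarrow> y \<in> carrier G \<Longrightarrow> sg k \<otimes> x = y \<longleftrightarrow> x = sg k \<otimes> y"
  by (metis l_one m_assoc sg_in sg_sq)

lemma sq_sg: "x \<in> carrier G \<Longrightarrow> \<exists>a. x \<otimes> x = sg a"
  using sq by (metis sg_0 sg_1)

lemma ca_sg: "x \<in> carrier G \<Longrightarrow> y \<in> carrier G \<Longrightarrow> x \<otimes> y = sg (if x \<otimes> y = y \<otimes> x then 0 else 1) \<otimes> (y \<otimes> x)"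
  using ca[of x y] by (auto simp: sgnel_def)

lemma ordprod_in: "(\<And>n. n < N \<Longrightarrow> f n \<in> carrier G) \<Longrightarrow> ordprod G f N \<in> carrier G"
  by (induction N) auto

lemma ordprod_ext: "(\<And>n. n < N \<Longrightarrow> f n = g n) \<Longrightarrow> ordprod G f N = ordprod G g N"
  by (induction N) auto

lemma ordprod_tail:
  assumes "\<And>n. n < N \<Longrightarrow> f n \<in> carrier G" "\<And>n. n \<ge> N \<Longrightarrow> f n = \<one>"
  shows "ordprod G f (N + k) = ordprod G f N"
proof -
  have "ordprod G f N \<in> carrier G" using assms(1) by (rule ordprod_in)
  then show ?thesis using assms by (induction k) auto
qed

lemma ordprod_tail2:
  assumes "\<And>n. n < N \<Longrightarrow> f n \<in> carrier G" "\<And>n. n \<ge> N \<Longrightarrow> f n = \<one>" "N \<le> N'"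
  shows "ordprod G f N' = ordprod G f N"
  using ordprod_tail[where f=f and N=N and k="N' - N"] assms by simp

lemma seq_pow_eq:
  assumes "\<And>n. n \<ge> N \<Longrightarrow> p n = 0" "\<And>n. p n \<noteq> 0 \<Longrightarrow> e n \<in> carrier G"
  shows "seq_pow G e p = ordprod G (\<lambda>n. e n [^] p n) N"
proof -
  define N0 where "N0 = (LEAST N. \<forall>n\<ge>N. p n = 0)"
  have ex: "\<exists>N. \<forall>n\<ge>N. p n = 0" using assms(1) by blast
  have h0: "\<forall>n\<ge>N0. p n = 0" unfolding N0_def by (rule LeastI_ex[OF ex])
  have le: "N0 \<le> N" unfolding N0_def by (rule Least_le) (use assms(1) in blast)
  have c: "e n [^] p n \<in> carrier G" for n
    using assms(2)[of n] by (cases "p n = 0") auto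
  have "ordprod G (\<lambda>n. e n [^] p n) N = ordprod G (\<lambda>n. e n [^] p n) N0"
    by (rule ordprod_tail2[OF _ _ le]) (use c h0 in auto)
  then show ?thesis unfolding seq_pow_def N0_def[symmetric] by simp
qed

lemma comm_past:
  assumes "x \<in> carrier G" "\<And>n. n < N \<Longrightarrow> f n \<in> carrier G"
    "\<And>n. n < N \<Longrightarrow> x \<otimes> f n = sg (t n) \<otimes> (f n \<otimes> x)"
  shows "x \<otimes> ordprod G f N = sg (\<Sum>n<N. t n) \<otimes> (ordprod G f N \<otimes> x)"
  using assms(2,3)
proof (induction N)
  case 0
  then show ?case using assms(1) by simp
next
  case (Suc N)
  have F: "ordprod G f N \<in> carrier G" using Suc.prems(1) by (auto intro: ordprod_in)
  have fN: "f N \<in> carrier G" using Suc.prems(1) by auto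
  have IH: "x \<otimes> ordprod G f N = sg (\<Sum>n<N. t n) \<otimes> (ordprod G f N \<otimes> x)"
    using Suc by auto
  have "x \<otimes> ordprod G f (Suc N) = (x \<otimes> ordprod G f N) \<otimes> f N"
    using F fN assms(1) by (simp add: m_assoc)
  also have "\<dots> = sg (\<Sum>n<N. t n) \<otimes> (ordprod G f N \<otimes> (x \<otimes> f N))"
    using F fN assms(1) by (simp add: IH m_assoc)
  also have "\<dots> = sg (\<Sum>n<N. t n) \<otimes> (ordprod G f N \<otimes> (sg (t N) \<otimes> (f N \<otimes> x)))"
    using Suc.prems(2)[of N] by simp
  also have "\<dots> = sg (\<Sum>n<N. t n) \<otimes> sg (t N) \<otimes> (ordprod G f N \<otimes> f N \<otimes> x)"
    using F fN assms(1) by (simp add: m_assoc sg_c2[of "ordprod G f N"])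
  also have "\<dots> = sg (\<Sum>n<Suc N. t n) \<otimes> (ordprod G f (Suc N) \<otimes> x)"
    by (simp add: sg_add)
  finally show ?case .
qed

lemma ordprod_sg:
  assumes "\<And>n. n < N \<Longrightarrow> g n \<in> carrier G" "\<And>n. n < N \<Longrightarrow> f n = sg (a n) \<otimes> g n"
  shows "ordprod G f N = sg (\<Sum>n<N. a n) \<otimes> ordprod G g N"
  using assms
proof (induction N)
  case 0
  then show ?case by simp
next
  case (Suc N)
  have F: "ordprod G g N \<in> carrier G" using Suc.prems(1) by (auto intro: ordprod_in)
  have gN: "g N \<in> carrier G" using Suc.prems(1) by auto
  have IH: "ordprod G f N = sg (\<Sum>n<N. a n) \<otimes> ordprod G g N" using Suc by auto
  show ?case using F gN
    by (simp add: IH Suc.prems(2) sg_add m_assoc sg_c2[of "ordprod G g N"])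
qed

lemma sum_tri_Suc:
  "(\<Sum>j<Suc N. \<Sum>k\<in>{j<..<Suc N}. t j k) = (\<Sum>j<N. \<Sum>k\<in>{j<..<N}. t j k) + (\<Sum>j<N. t j N)"
proof -
  have "(\<Sum>j<Suc N. \<Sum>k\<in>{j<..<Suc N}. t j k) = (\<Sum>j<N. \<Sum>k\<in>{j<..<Suc N}. t j k)"
  proof -
    have "{N<..<Suc N} = {}" by auto
    then show ?thesis by simp
  qed
  also have "\<dots> = (\<Sum>j<N. (\<Sum>k\<in>{j<..<N}. t j k) + t j N)"
  proof (rule sum.cong)
    fix j assume "j \<in> {..<N}"
    then have "{j<..<Suc N} = insert N {j<..<N}" by auto
    then show "(\<Sum>k\<in>{j<..<Suc N}. t j k) = (\<Sum>k\<in>{j<..<N}. t j k) + t j N" by (simp add: add.commute)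
  qed simp
  finally show ?thesis by (simp add: sum.distrib)
qed

lemma ordprod_mult:
  assumes "\<And>n. n < N \<Longrightarrow> f n \<in> carrier G" "\<And>n. n < N \<Longrightarrow> g n \<in> carrier G"
    "\<And>j k. j < k \<Longrightarrow> k < N \<Longrightarrow> f k \<otimes> g j = sg (t j k) \<otimes> (g j \<otimes> f k)"
  shows "ordprod G f N \<otimes> ordprod G g N
     = sg (\<Sum>j<N. \<Sum>k\<in>{j<..<N}. t j k) \<otimes> ordprod G (\<lambda>n. f n \<otimes> g n) N"
  using assms
proof (induction N)
  case 0
  then show ?case by simp
next
  case (Suc N)
  have F: "ordprod G f N \<in> carrier G" using Suc.prems(1) by (auto intro: ordprod_in)
  have Gg: "ordprod G g N \<in> carrier G" using Suc.prems(2) by (auto intro: ordprod_in)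
  have H: "ordprod G (\<lambda>n. f n \<otimes> g n) N \<in> carrier G" using Suc.prems(1,2) by (auto intro: ordprod_in)
  have fN: "f N \<in> carrier G" and gN: "g N \<in> carrier G" using Suc.prems(1,2) by auto
  have IH: "ordprod G f N \<otimes> ordprod G g N
     = sg (\<Sum>j<N. \<Sum>k\<in>{j<..<N}. t j k) \<otimes> ordprod G (\<lambda>n. f n \<otimes> g n) N" using Suc by auto
  have cp: "f N \<otimes> ordprod G g N = sg (\<Sum>j<N. t j N) \<otimes> (ordprod G g N \<otimes> f N)"
    by (rule comm_past) (use fN Suc.prems(2,3) in auto)
  have "ordprod G f (Suc N) \<otimes> ordprod G g (Suc N) = ordprod G f N \<otimes> (f N \<otimes> ordprod G g N) \<otimes> g N"
    using F Gg fN gN by (simp add: m_assoc)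
  also have "\<dots> = sg (\<Sum>j<N. t j N) \<otimes> (ordprod G f N \<otimes> ordprod G g N) \<otimes> (f N \<otimes> g N)"
    using F Gg fN gN by (simp add: cp m_assoc sg_c2[of "ordprod G f N"])
  also have "\<dots> = sg (\<Sum>j<N. t j N) \<otimes> sg (\<Sum>j<N. \<Sum>k\<in>{j<..<N}. t j k) \<otimes> (ordprod G (\<lambda>n. f n \<otimes> g n) N \<otimes> (f N \<otimes> g N))"
    using H fN gN by (simp add: IH m_assoc)
  also have "\<dots> = sg (\<Sum>j<Suc N. \<Sum>k\<in>{j<..<Suc N}. t j k) \<otimes> ordprod G (\<lambda>n. f n \<otimes> g n) (Suc N)"
    by (simp only: sum_tri_Suc sg_add[symmetric] add.commute ordprod.simps)
  finally show ?case .
qed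

lemma ca_d: "x \<in> carrier G \<Longrightarrow> y \<in> carrier G \<Longrightarrow> x \<otimes> y = sg ((1 - comm_fun G y x) div 2) \<otimes> (y \<otimes> x)"
  using ca_sg[of x y] by (auto simp: comm_fun_def)

lemma fin01: "finitary01 I p \<Longrightarrow> p n = 0 \<or> p n = 1"
  unfolding finitary01_def by auto

lemma fin01I: "finitary01 I p \<Longrightarrow> p n \<noteq> 0 \<Longrightarrow> n \<in> I"
  unfolding finitary01_def by auto

lemma main_id:
  assumes p: "finitary01 I p" and q: "finitary01 I q" and N: "\<forall>n\<ge>N. p n = 0 \<and> q n = 0"
    and ein: "\<forall>n\<in>I. e n \<in> carrier G"
  shows "seq_pow G e p \<otimes> seq_pow G e q =
     sg (\<Sum>j<N. \<Sum>k\<in>{j<..<N}. ((1 - comm_fun G (e j) (e k)) div 2) * int (p k) * int (q j))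
       \<otimes> seq_pow G e (\<lambda>n. p n + q n)"
proof -
  have cp: "p n \<noteq> 0 \<Longrightarrow> e n \<in> carrier G" for n using fin01I[OF p] ein by auto
  have cq: "q n \<noteq> 0 \<Longrightarrow> e n \<in> carrier G" for n using fin01I[OF q] ein by auto
  have fc: "e n [^] p n \<in> carrier G" for n using cp[of n] by (cases "p n = 0") auto
  have gc: "e n [^] q n \<in> carrier G" for n using cq[of n] by (cases "q n = 0") auto
  have sp: "seq_pow G e p = ordprod G (\<lambda>n. e n [^] p n) N"
    by (rule seq_pow_eq) (use N cp in auto)
  have sq': "seq_pow G e q = ordprod G (\<lambda>n. e n [^] q n) N"
    by (rule seq_pow_eq) (use N cq in auto)
  have spq: "seq_pow G e (\<lambda>n. p n + q n) = ordprod G (\<lambda>n. e n [^] (p n + q n)) N"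
    by (rule seq_pow_eq) (use N cp cq in auto)
  have fg: "e n [^] p n \<otimes> e n [^] q n = e n [^] (p n + q n)" for n
  proof (cases "p n = 0 \<and> q n = 0")
    case True then show ?thesis by simp
  next
    case False
    then have "e n \<in> carrier G" using cp cq by auto
    then show ?thesis by (simp add: nat_pow_mult)
  qed
  have sw: "e k [^] p k \<otimes> e j [^] q j = sg (((1 - comm_fun G (e j) (e k)) div 2) * int (p k) * int (q j))
      \<otimes> (e j [^] q j \<otimes> e k [^] p k)" for j k
  proof (cases "p k = 0 \<or> q j = 0")
    case True then show ?thesis using fc gc by auto
  next
    case False
    then have "p k = 1" "q j = 1" using fin01[OF p, of k] fin01[OF q, of j] by auto
    moreover have "e k \<in> carrier G" "e j \<in> carrier G" using False cp cq by auto
    ultimately show ?thesis using ca_d[of "e k" "e j"] by simp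
  qed
  show ?thesis unfolding sp sq' spq
    by (subst ordprod_mult[where t = "\<lambda>j k. ((1 - comm_fun G (e j) (e k)) div 2) * int (p k) * int (q j)"])
      (use fc gc sw fg in auto)
qed

lemma sum_sq_Suc: "(\<Sum>j<Suc N. \<Sum>k<Suc N. t j k) = (\<Sum>j<N. \<Sum>k<N. t j k) + (\<Sum>j<N. t j N) + (\<Sum>k<N. t N k) + t N N"
  by (simp add: sum.distrib ac_simps)

lemma sym_sum:
  fixes d :: "nat \<Rightarrow> nat \<Rightarrow> int"
  assumes "\<And>j k. d j k = d k j" "\<And>j. d j j = 0"
  shows "(\<Sum>j<N. \<Sum>k\<in>{j<..<N}. d j k * a k * b j) + (\<Sum>j<N. \<Sum>k\<in>{j<..<N}. d j k * b k * a j)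
    = (\<Sum>j<N. \<Sum>k<N. d j k * a k * b j)"
proof (induction N)
  case 0 then show ?case by simp
next
  case (Suc N)
  have "(\<Sum>k<N. d N k * a k * b N) = (\<Sum>j<N. d j N * b N * a j)"
    using assms(1) by (simp add: mult.commute mult.left_commute)
  then show ?case using Suc assms(2) by (simp only: sum_tri_Suc sum_sq_Suc)
qed

lemma comm_main:
  assumes p: "finitary01 I p" and q: "finitary01 I q" and N: "\<forall>n\<ge>N. p n = 0 \<and> q n = 0"
    and ein: "\<forall>n\<in>I. e n \<in> carrier G"
  shows "comm_fun G (seq_pow G e p) (seq_pow G e q) =
     neg1pow (\<Sum>j<N. \<Sum>k<N. ((1 - comm_fun G (e j) (e k)) div 2) * int (p k) * int (q j))"
proof -
  define d where "d j k = ((1 - comm_fun G (e j) (e k)) div 2)" for j k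
  have ds: "d j k = d k j" for j k unfolding d_def comm_fun_def by auto
  have dd: "d j j = 0" for j unfolding d_def comm_fun_def by auto
  define S1 where "S1 = (\<Sum>j<N. \<Sum>k\<in>{j<..<N}. d j k * int (p k) * int (q j))"
  define S2 where "S2 = (\<Sum>j<N. \<Sum>k\<in>{j<..<N}. d j k * int (q k) * int (p j))"
  define T where "T = (\<Sum>j<N. \<Sum>k<N. d j k * int (p k) * int (q j))"
  have ST: "S1 + S2 = T" unfolding S1_def S2_def T_def by (rule sym_sum[OF ds dd])
  have cp: "p n \<noteq> 0 \<Longrightarrow> e n \<in> carrier G" for n using fin01I[OF p] ein by auto
  have cq: "q n \<noteq> 0 \<Longrightarrow> e n \<in> carrier G" for n using fin01I[OF q] ein by auto
  have fc: "e n [^] p n \<in> carrier G" for n using cp[of n] by (cases "p n = 0") auto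
  have gc: "e n [^] q n \<in> carrier G" for n using cq[of n] by (cases "q n = 0") auto
  have hc: "e n [^] (p n + q n) \<in> carrier G" for n using cp[of n] cq[of n] by (cases "p n + q n = 0") auto
  have Pc: "seq_pow G e p \<in> carrier G"
    by (subst seq_pow_eq[of N]) (use N cp fc in \<open>auto intro!: ordprod_in\<close>)
  have Qc: "seq_pow G e q \<in> carrier G"
    by (subst seq_pow_eq[of N]) (use N cq gc in \<open>auto intro!: ordprod_in\<close>)
  have Cc: "seq_pow G e (\<lambda>n. p n + q n) \<in> carrier G"
    by (subst seq_pow_eq[of N]) (use N cp cq hc in \<open>auto intro!: ordprod_in\<close>)
  have e1: "seq_pow G e p \<otimes> seq_pow G e q = sg S1 \<otimes> seq_pow G e (\<lambda>n. p n + q n)"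
    unfolding S1_def d_def by (rule main_id[OF p q N ein])
  have e2: "seq_pow G e q \<otimes> seq_pow G e p = sg S2 \<otimes> seq_pow G e (\<lambda>n. p n + q n)"
    using main_id[OF q p _ ein, of N] N unfolding S2_def d_def by (simp add: add.commute)
  have "seq_pow G e p \<otimes> seq_pow G e q = sg T \<otimes> (seq_pow G e q \<otimes> seq_pow G e p)"
    unfolding e1 e2 ST[symmetric] sg_add using Cc
    by (simp add: m_assoc sg_sq flip: m_assoc[of "sg S2" "sg S2"])
  then have key: "seq_pow G e p \<otimes> seq_pow G e q = seq_pow G e q \<otimes> seq_pow G e p \<longleftrightarrow> even T"
    using sg_one_iff[of T] Pc Qc
    by (metis l_one m_closed r_cancel_one' sg_in)
  have "(\<Sum>j<N. \<Sum>k<N. ((1 - comm_fun G (e j) (e k)) div 2) * int (p k) * int (q j)) = T"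
    unfolding T_def d_def ..
  then show ?thesis unfolding comm_fun_def[of G "seq_pow G e p"] neg1pow_def
    using key by simp
qed

lemma neg1pow_uminus: "neg1pow (- x) = neg1pow x"
  by (simp add: neg1pow_def)

lemma part1:
  assumes p: "finitary01 I p" and q: "finitary01 I q" and N: "\<forall>n\<ge>N. p n = 0 \<and> q n = 0"
    and ein: "\<forall>n\<in>I. e n \<in> carrier G"
  shows "comm_fun G (seq_pow G e p) (seq_pow G e q)
          = neg1pow (((\<Sum>j<N. \<Sum>k<N. comm_fun G (e j) (e k) * int (p k) * int (q j))
                      - (\<Sum>n<N. int (p n)) * (\<Sum>n<N. int (q n))) div 2)"
proof -
  define T where "T = (\<Sum>j<N. \<Sum>k<N. ((1 - comm_fun G (e j) (e k)) div 2) * int (p k) * int (q j))"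
  have trm: "comm_fun G (e j) (e k) * int (p k) * int (q j)
      = int (p k) * int (q j) - 2 * (((1 - comm_fun G (e j) (e k)) div 2) * int (p k) * int (q j))" for j k
    by (simp add: comm_fun_def algebra_simps)
  have "(\<Sum>j<N. \<Sum>k<N. comm_fun G (e j) (e k) * int (p k) * int (q j))
      = (\<Sum>j<N. \<Sum>k<N. int (p k) * int (q j)) - 2 * T"
    unfolding trm T_def by (simp add: sum_subtractf sum_distrib_left)
  also have "(\<Sum>j<N. \<Sum>k<N. int (p k) * int (q j)) = (\<Sum>n<N. int (p n)) * (\<Sum>n<N. int (q n))"
    unfolding sum_product by (rule sum.swap)
  finally have "((\<Sum>j<N. \<Sum>k<N. comm_fun G (e j) (e k) * int (p k) * int (q j))
                      - (\<Sum>n<N. int (p n)) * (\<Sum>n<N. int (q n))) div 2 = - T" by simp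
  note hyp = this
  have c: "comm_fun G (seq_pow G e p) (seq_pow G e q) = neg1pow T" unfolding T_def by (rule comm_main[OF p q N ein])
  show ?thesis unfolding hyp c neg1pow_uminus ..
qed

lemma part2:
  assumes p: "finitary01 I p" and q: "finitary01 I q" and N: "\<forall>n\<ge>N. p n = 0 \<and> q n = 0"
    and ein: "\<forall>n\<in>I. e n \<in> carrier G" and ac: "anticomm_seq G m e I"
  shows "comm_fun G (seq_pow G e p) (seq_pow G e q)
             = neg1pow ((\<Sum>n<N. int (p n)) * (\<Sum>n<N. int (q n)) - (\<Sum>n<N. int (p n * q n)))"
proof -
  have trm: "((1 - comm_fun G (e j) (e k)) div 2) * int (p k) * int (q j)
      = int (p k) * int (q j) - (if j = k then int (p k) * int (q j) else 0)" for j k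
  proof (cases "p k = 0 \<or> q j = 0 \<or> j = k")
    case True
    moreover have "comm_fun G (e j) (e j) = 1" by (simp add: comm_fun_def)
    ultimately show ?thesis by auto
  next
    case False
    then have "j \<in> I" "k \<in> I" using fin01I[OF p] fin01I[OF q] by auto
    then have "e j \<otimes> e k = m \<otimes> (e k \<otimes> e j)" using ac False unfolding anticomm_seq_def by blast
    moreover have "e j \<in> carrier G" "e k \<in> carrier G" using \<open>j \<in> I\<close> \<open>k \<in> I\<close> ein by auto
    ultimately have "e j \<otimes> e k \<noteq> e k \<otimes> e j"
      using m_ne r_cancel_one[of "e k \<otimes> e j" m] by auto
    then show ?thesis using False by (simp add: comm_fun_def)
  qed
  have "(\<Sum>j<N. \<Sum>k<N. ((1 - comm_fun G (e j) (e k)) div 2) * int (p k) * int (q j))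
     = (\<Sum>j<N. \<Sum>k<N. int (p k) * int (q j)) - (\<Sum>j<N. int (p j) * int (q j))"
    unfolding trm by (simp add: sum_subtractf)
  also have "(\<Sum>j<N. \<Sum>k<N. int (p k) * int (q j)) = (\<Sum>n<N. int (p n)) * (\<Sum>n<N. int (q n))"
    unfolding sum_product by (rule sum.swap)
  finally have X: "(\<Sum>j<N. \<Sum>k<N. ((1 - comm_fun G (e j) (e k)) div 2) * int (p k) * int (q j))
     = (\<Sum>n<N. int (p n)) * (\<Sum>n<N. int (q n)) - (\<Sum>n<N. int (p n * q n))" by (simp only: of_nat_mult)
  show ?thesis unfolding X[symmetric] by (rule comm_main[OF p q N ein])
qed

lemma fin_bound: "finitary01 I p \<Longrightarrow> \<exists>N. \<forall>n\<ge>N. p n = 0"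
proof -
  assume "finitary01 I p"
  then have "finite {n. p n \<noteq> 0}" unfolding finitary01_def by auto
  then obtain N where "{n. p n \<noteq> 0} \<subseteq> {..<N}" using finite_nat_bounded by blast
  then show ?thesis by (metis (mono_tags) leD lessThan_iff mem_Collect_eq subsetD)
qed

lemma fin_bound2: "finitary01 I p \<Longrightarrow> finitary01 I q \<Longrightarrow> \<exists>N. \<forall>n\<ge>N. p n = 0 \<and> q n = 0"
proof -
  assume a: "finitary01 I p" "finitary01 I q"
  obtain N1 where "\<forall>n\<ge>N1. p n = 0" using fin_bound[OF a(1)] by blast
  moreover obtain N2 where "\<forall>n\<ge>N2. q n = 0" using fin_bound[OF a(2)] by blast
  ultimately show ?thesis by (intro exI[of _ "max N1 N2"]) auto
qed

lemma seq_pow_in: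
  assumes p: "finitary01 I p" and ein: "\<forall>n\<in>I. e n \<in> carrier G"
  shows "seq_pow G e p \<in> carrier G"
proof -
  obtain N where N: "\<forall>n\<ge>N. p n = 0" using fin_bound[OF p] by blast
  have cp: "p n \<noteq> 0 \<Longrightarrow> e n \<in> carrier G" for n using fin01I[OF p] ein by auto
  have fc: "e n [^] p n \<in> carrier G" for n using cp[of n] by (cases "p n = 0") auto
  show ?thesis by (subst seq_pow_eq[of N]) (use N cp fc in \<open>auto intro!: ordprod_in\<close>)
qed

lemma tri_sq:
  fixes a :: "nat \<Rightarrow> int"
  assumes "\<And>n. a n = 0 \<or> a n = 1"
  shows "2 * (\<Sum>j<N. \<Sum>k\<in>{j<..<N}. a k * a j) = (\<Sum>n<N. a n) * ((\<Sum>n<N. a n) - 1)"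
proof (induction N)
  case 0 then show ?case by simp
next
  case (Suc N)
  have sq: "a N * a N = a N" using assms[of N] by auto
  have "2 * (\<Sum>j<Suc N. \<Sum>k\<in>{j<..<Suc N}. a k * a j)
     = 2 * (\<Sum>j<N. \<Sum>k\<in>{j<..<N}. a k * a j) + 2 * a N * (\<Sum>j<N. a j)"
    by (simp only: sum_tri_Suc) (simp add: sum_distrib_left algebra_simps)
  also have "\<dots> = (\<Sum>n<N. a n) * ((\<Sum>n<N. a n) - 1) + 2 * a N * (\<Sum>j<N. a j)"
    using Suc by simp
  also have "\<dots> = (\<Sum>n<Suc N. a n) * ((\<Sum>n<Suc N. a n) - 1)"
    using sq by (simp add: algebra_simps)
  finally show ?case .
qed

lemma parity4:
  fixes S P :: int
  assumes h: "2 * S = P * (P - 1)"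
  shows "(odd S \<longleftrightarrow> P mod 4 = 2 \<or> P mod 4 = 3) \<and> (odd (P + S) \<longleftrightarrow> P mod 4 = 2 \<or> P mod 4 = 1)"
proof -
  define a where "a = P div 4"
  define r where "r = P mod 4"
  have P: "P = 4 * a + r" unfolding a_def r_def by simp
  have r: "r = 0 \<or> r = 1 \<or> r = 2 \<or> r = 3" unfolding r_def by auto
  define K where "K = 4*a*a + a*(2*r-1)"
  have "2 * S = (4*a+r)*(4*a+r-1)" using h P by simp
  then have h2: "2 * S = 4 * K + r * (r - 1)" by (simp add: K_def algebra_simps)
  show ?thesis using r
  proof (elim disjE)
    assume "r = 0" then have "2 * S = 4 * K" "P = 4 * a" using h2 P by auto
    then show ?thesis using \<open>r = 0\<close> by presburger
  next
    assume "r = 1" then have "2 * S = 4 * K" "P = 4 * a + 1" using h2 P by auto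
    then show ?thesis using \<open>r = 1\<close> by presburger
  next
    assume "r = 2" then have "2 * S = 4 * K + 2" "P = 4 * a + 2" using h2 P by auto
    then show ?thesis using \<open>r = 2\<close> by presburger
  next
    assume "r = 3" then have "2 * S = 4 * K + 6" "P = 4 * a + 3" using h2 P by auto
    then show ?thesis using \<open>r = 3\<close> by presburger
  qed
qed

lemma part4:
  assumes p: "finitary01 I p" and ein: "\<forall>n\<in>I. e n \<in> carrier G" and ac: "anticomm_seq G m e I"
  shows "(let P = (\<Sum>n\<in>{n. p n \<noteq> 0}. p n) in
        seq_pow G e p \<otimes> seq_pow G e p
          = seq_pow G e (\<lambda>n. 2 * p n) \<otimes> m [^] (P * (P - 1) div 2)
        \<and> (positive_seq G e I \<longrightarrow>
             (seq_pow G e p \<otimes> seq_pow G e p = m \<longleftrightarrow> P mod 4 = 2 \<or> P mod 4 = 3))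
        \<and> (negative_seq G m e I \<longrightarrow>
             (seq_pow G e p \<otimes> seq_pow G e p = m \<longleftrightarrow> P mod 4 = 2 \<or> P mod 4 = 1)))"
proof -
  obtain N where N: "\<forall>n\<ge>N. p n = 0" using fin_bound[OF p] by blast
  define P where "P = (\<Sum>n\<in>{n. p n \<noteq> 0}. p n)"
  have PN: "P = (\<Sum>n<N. p n)" unfolding P_def
  proof (rule sum.mono_neutral_left)
    show "{n. p n \<noteq> 0} \<subseteq> {..<N}" using N not_less by blast
  qed auto
  define S where "S = (\<Sum>j<N. \<Sum>k\<in>{j<..<N}. ((1 - comm_fun G (e j) (e k)) div 2) * int (p k) * int (p j))"
  have trm: "((1 - comm_fun G (e j) (e k)) div 2) * int (p k) * int (p j) = int (p k) * int (p j)"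
    if "j < k" for j k
  proof (cases "p k = 0 \<or> p j = 0")
    case True then show ?thesis by auto
  next
    case False
    then have "j \<in> I" "k \<in> I" using fin01I[OF p] by auto
    moreover have "j \<noteq> k" using that by simp
    ultimately have "e j \<otimes> e k = m \<otimes> (e k \<otimes> e j)" using ac unfolding anticomm_seq_def by blast
    moreover have "e j \<in> carrier G" "e k \<in> carrier G" using \<open>j \<in> I\<close> \<open>k \<in> I\<close> ein by auto
    ultimately have "e j \<otimes> e k \<noteq> e k \<otimes> e j"
      using m_ne r_cancel_one[of "e k \<otimes> e j" m] by auto
    then show ?thesis using False by (simp add: comm_fun_def)
  qed
  have S2: "S = (\<Sum>j<N. \<Sum>k\<in>{j<..<N}. int (p k) * int (p j))"
    unfolding S_def by (intro sum.cong refl) (simp add: trm)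
  have "2 * S = int P * (int P - 1)"
    unfolding S2 PN of_nat_sum by (rule tri_sq) (use fin01[OF p] in auto)
  note par = parity4[OF this]
  have PP: "int (P * (P - 1) div 2) = S"
  proof -
    have "int (P * (P - 1)) = int P * (int P - 1)" by (cases P) (auto simp: algebra_simps)
    then have "int (P * (P - 1)) = 2 * S" using \<open>2 * S = int P * (int P - 1)\<close> by simp
    then show ?thesis by (simp only: zdiv_int of_nat_numeral)
  qed
  have md: "int P mod 4 = int (P mod 4)" by (simp add: zmod_int)
  have mid: "seq_pow G e p \<otimes> seq_pow G e p = sg S \<otimes> seq_pow G e (\<lambda>n. 2 * p n)"
    using main_id[OF p p _ ein, of N] N unfolding S_def by (simp add: mult_2)
  have cp: "p n \<noteq> 0 \<Longrightarrow> e n \<in> carrier G" for n using fin01I[OF p] ein by auto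
  have s2: "seq_pow G e (\<lambda>n. 2 * p n) = ordprod G (\<lambda>n. e n [^] (2 * p n)) N"
    by (rule seq_pow_eq) (use N cp in auto)
  have one: "ordprod G (\<lambda>n. \<one>) N' = \<one>" for N' by (induction N') auto
  have spc: "seq_pow G e (\<lambda>n. 2 * p n) \<in> carrier G"
  proof -
    have fc: "e n [^] (2 * p n) \<in> carrier G" for n using cp[of n] by (cases "p n = 0") auto
    show ?thesis unfolding s2 by (rule ordprod_in) (rule fc)
  qed
  have A: "seq_pow G e p \<otimes> seq_pow G e p = seq_pow G e (\<lambda>n. 2 * p n) \<otimes> m [^] (P * (P - 1) div 2)"
    unfolding mid m_nat_pow PP using spc by (simp add: sg_c)
  have B: "positive_seq G e I \<Longrightarrow> seq_pow G e p \<otimes> seq_pow G e p = sg S"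
  proof -
    assume pos: "positive_seq G e I"
    have "e n [^] (2 * p n) = sg 0 \<otimes> \<one>" for n
    proof (cases "p n = 0")
      case False
      then have "p n = 1" "n \<in> I" using fin01[OF p, of n] fin01I[OF p] by auto
      then show ?thesis using pos cp[of n] unfolding positive_seq_def
        by (simp add: numeral_2_eq_2)
    qed simp
    then have "seq_pow G e (\<lambda>n. 2 * p n) = \<one>" unfolding s2
      using ordprod_sg[of N "\<lambda>_. \<one>" "\<lambda>n. e n [^] (2 * p n)" "\<lambda>_. 0"] one by simp
    then show ?thesis unfolding mid by simp
  qed
  have C: "negative_seq G m e I \<Longrightarrow> seq_pow G e p \<otimes> seq_pow G e p = sg (int P + S)"
  proof -
    assume neg: "negative_seq G m e I"
    have "e n [^] (2 * p n) = sg (int (p n)) \<otimes> \<one>" for n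
    proof (cases "p n = 0")
      case False
      then have "p n = 1" "n \<in> I" using fin01[OF p, of n] fin01I[OF p] by auto
      then show ?thesis using neg cp[of n] unfolding negative_seq_def
        by (simp add: numeral_2_eq_2 sg_1)
    qed simp
    then have "seq_pow G e (\<lambda>n. 2 * p n) = sg (int P)" unfolding s2 PN of_nat_sum
      using ordprod_sg[of N "\<lambda>_. \<one>" "\<lambda>n. e n [^] (2 * p n)" "\<lambda>n. int (p n)"] one by simp
    then show ?thesis unfolding mid by (simp add: sg_add add.commute)
  qed
  show ?thesis unfolding Let_def P_def[symmetric]
    using A B C par md sg_m_iff by auto
qed

lemma xor_fin:
  assumes "finitary01 I p" "finitary01 I q"
  shows "finitary01 I (\<lambda>n. if p n = q n then 0 else 1::nat)"
proof -
  have "{n. p n \<noteq> q n} \<subseteq> {n. p n \<noteq> 0} \<union> {n. q n \<noteq> 0}" by auto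
  then have "finite {n. p n \<noteq> q n}" using assms unfolding finitary01_def by (auto intro: finite_subset)
  then show ?thesis using assms unfolding finitary01_def by auto
qed

lemma prod_xor:
  assumes p: "finitary01 I p" and q: "finitary01 I q" and ein: "\<forall>n\<in>I. e n \<in> carrier G"
  shows "\<exists>K. seq_pow G e p \<otimes> seq_pow G e q = sg K \<otimes> seq_pow G e (\<lambda>n. if p n = q n then 0 else 1)"
proof -
  obtain N where N: "\<forall>n\<ge>N. p n = 0 \<and> q n = 0" using fin_bound2[OF p q] by blast
  define r where "r = (\<lambda>n. if p n = q n then 0 else 1::nat)"
  have cp: "p n \<noteq> 0 \<Longrightarrow> e n \<in> carrier G" for n using fin01I[OF p] ein by auto
  have cq: "q n \<noteq> 0 \<Longrightarrow> e n \<in> carrier G" for n using fin01I[OF q] ein by auto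
  have rN: "\<forall>n\<ge>N. r n = 0" using N unfolding r_def by auto
  have cr: "r n \<noteq> 0 \<Longrightarrow> e n \<in> carrier G" for n using cp cq unfolding r_def by (cases "p n = 0"; cases "q n = 0") auto
  have rc: "e n [^] r n \<in> carrier G" for n using cr[of n] by (cases "r n = 0") auto
  define a where "a n = (if p n + q n = 2 \<and> e n \<otimes> e n \<noteq> \<one> then 1 else 0::int)" for n
  have fac: "e n [^] (p n + q n) = sg (a n) \<otimes> e n [^] r n" for n
  proof -
    consider "p n = 0" "q n = 0" | "p n = 1" "q n = 0" | "p n = 0" "q n = 1" | "p n = 1" "q n = 1"
      using fin01[OF p, of n] fin01[OF q, of n] by auto
    then show ?thesis
    proof cases
      case 4
      then have c: "e n \<in> carrier G" using cp by auto
      have "e n [^] (2::nat) = e n \<otimes> e n" using c by (simp add: numeral_2_eq_2)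
      then show ?thesis using 4 sq[OF c] c by (auto simp: a_def r_def sgnel_def)
    qed (auto simp: a_def r_def cp cq)
  qed
  have "seq_pow G e (\<lambda>n. p n + q n) = ordprod G (\<lambda>n. e n [^] (p n + q n)) N"
    by (rule seq_pow_eq) (use N cp cq in auto)
  also have "\<dots> = sg (\<Sum>n<N. a n) \<otimes> ordprod G (\<lambda>n. e n [^] r n) N"
    by (rule ordprod_sg) (use rc fac in auto)
  also have "ordprod G (\<lambda>n. e n [^] r n) N = seq_pow G e r"
    by (rule seq_pow_eq[symmetric]) (use rN cr in auto)
  finally have X: "seq_pow G e (\<lambda>n. p n + q n) = sg (\<Sum>n<N. a n) \<otimes> seq_pow G e r" .
  have rf: "finitary01 I r" unfolding r_def by (rule xor_fin[OF p q])
  have rc2: "seq_pow G e r \<in> carrier G" by (rule seq_pow_in[OF rf ein])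
  show ?thesis unfolding r_def[symmetric] main_id[OF p q N ein] X using rc2
    by (intro exI[of _ "(\<Sum>j<N. \<Sum>k\<in>{j<..<N}. ((1 - comm_fun G (e j) (e k)) div 2) * int (p k) * int (q j)) + (\<Sum>n<N. a n)"])
      (simp add: sg_add m_assoc)
qed

lemma basic_sg:
  assumes "basic_seq G m e I" "finitary01 I r" "seq_pow G e r = sg k"
  shows "r = (\<lambda>_. 0)"
proof (rule ccontr)
  assume "r \<noteq> (\<lambda>_. 0)"
  then have "seq_pow G e r \<noteq> \<one> \<and> seq_pow G e r \<noteq> m" using assms(1,2) unfolding basic_seq_def by blast
  then show False using assms(3) unfolding sgnel_def by (auto split: if_splits)
qed

lemma inj_sg:
  assumes p: "finitary01 I p" and q: "finitary01 I q" and ein: "\<forall>n\<in>I. e n \<in> carrier G"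
    and bas: "basic_seq G m e I"
    and eq: "sg a \<otimes> seq_pow G e p = sg b \<otimes> seq_pow G e q"
  shows "p = q \<and> sg a = sg b"
proof -
  define r where "r = (\<lambda>n. if p n = q n then 0 else 1::nat)"
  obtain K where K: "seq_pow G e p \<otimes> seq_pow G e q = sg K \<otimes> seq_pow G e r"
    using prod_xor[OF p q ein] unfolding r_def by blast
  have rf: "finitary01 I r" unfolding r_def by (rule xor_fin[OF p q])
  have Pc: "seq_pow G e p \<in> carrier G" by (rule seq_pow_in[OF p ein])
  have Qc: "seq_pow G e q \<in> carrier G" by (rule seq_pow_in[OF q ein])
  have Rc: "seq_pow G e r \<in> carrier G" by (rule seq_pow_in[OF rf ein])
  obtain c where c: "seq_pow G e q \<otimes> seq_pow G e q = sg c" using sq_sg[OF Qc] by blast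
  have P1: "seq_pow G e p = sg (a + b) \<otimes> seq_pow G e q"
    using eq Pc Qc sg_cancel[of "seq_pow G e p" "sg b \<otimes> seq_pow G e q" a]
    by (simp add: sg_add m_assoc)
  have "sg K \<otimes> seq_pow G e r = seq_pow G e p \<otimes> seq_pow G e q" using K by simp
  also have "\<dots> = sg (a + b) \<otimes> (seq_pow G e q \<otimes> seq_pow G e q)" unfolding P1 using Qc by (simp add: m_assoc)
  also have "\<dots> = sg (a + b + c)" unfolding c sg_add ..
  finally have "sg K \<otimes> seq_pow G e r = sg (a + b + c)" .
  then have "seq_pow G e r = sg (K + (a + b + c))"
    using Rc sg_cancel[of "seq_pow G e r" "sg (a + b + c)" K] by (simp add: sg_add)
  then have "r = (\<lambda>_. 0)" by (rule basic_sg[OF bas rf])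
  then have r0: "r n = 0" for n by simp
  have pq: "p = q"
  proof (rule ext)
    fix n show "p n = q n" using r0[of n] unfolding r_def by (auto split: if_splits)
  qed
  then have "sg a \<otimes> seq_pow G e q = sg b \<otimes> seq_pow G e q" using eq by simp
  then have "sg a = sg b" using Qc by (simp add: r_cancel)
  with pq show ?thesis by blast
qed

lemma P_card: "finitary01 I p \<Longrightarrow> (\<Sum>n\<in>{n. p n \<noteq> 0}. p n) = card {n. p n \<noteq> 0}"
proof -
  assume p: "finitary01 I p"
  have "(\<Sum>n\<in>{n. p n \<noteq> 0}. p n) = (\<Sum>n\<in>{n. p n \<noteq> 0}. 1)"
  proof (rule sum.cong)
    fix x assume "x \<in> {n. p n \<noteq> 0}"
    then show "p x = 1" using fin01[OF p, of x] by auto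
  qed simp
  then show ?thesis by simp
qed

lemma part5:
  assumes I: "I = {..<n}" and ac: "anticomm_seq G m e I" and ein: "\<forall>n\<in>I. e n \<in> carrier G"
    and bas: "basic_seq G m e I"
  shows "(let S = {x. (\<exists>p. finitary01 I p \<and> x = seq_pow G e p) \<and> x \<otimes> x = m} in
        (positive_seq G e I \<longrightarrow> card S = bsum n 2 + bsum n 3)
        \<and> (negative_seq G m e I \<longrightarrow> card S = bsum n 1 + bsum n 2))"
proof -
  define S where "S = {x. (\<exists>p. finitary01 I p \<and> x = seq_pow G e p) \<and> x \<otimes> x = m}"
  have inj: "inj_on (seq_pow G e) {p. finitary01 I p}"
  proof (rule inj_onI)
    fix p q assume "p \<in> {p. finitary01 I p}" "q \<in> {p. finitary01 I p}" "seq_pow G e p = seq_pow G e q"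
    then show "p = q" using inj_sg[where p=p and q=q and a=0 and b=0] ein bas seq_pow_in[OF _ ein] by auto
  qed
  have cardS: "card S = card {p. finitary01 I p \<and> Q (card {k. p k \<noteq> 0})}"
    if hQ: "\<And>p. finitary01 I p \<Longrightarrow> (seq_pow G e p \<otimes> seq_pow G e p = m \<longleftrightarrow> Q (card {k. p k \<noteq> 0}))" for Q
  proof -
    have "S = seq_pow G e ` {p. finitary01 I p \<and> Q (card {k. p k \<noteq> 0})}"
      unfolding S_def using hQ by auto
    moreover have "inj_on (seq_pow G e) {p. finitary01 I p \<and> Q (card {k. p k \<noteq> 0})}"
      by (rule inj_on_subset[OF inj]) auto
    ultimately show ?thesis by (simp add: card_image)
  qed
  have pos: "card S = bsum n 2 + bsum n 3" if ps: "positive_seq G e I"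
  proof -
    have "card S = card {p. finitary01 I p \<and> (card {k. p k \<noteq> 0} mod 4 = 2 \<or> card {k. p k \<noteq> 0} mod 4 = 3)}"
    proof (rule cardS)
      fix p assume fp: "finitary01 I p"
      note h = part4[OF fp ein ac, unfolded Let_def P_card[OF fp]]
      show "(seq_pow G e p \<otimes> seq_pow G e p = m) = (card {k. p k \<noteq> 0} mod 4 = 2 \<or> card {k. p k \<noteq> 0} mod 4 = 3)"
        using h[THEN conjunct2, THEN conjunct1] ps by blast
    qed
    also have "\<dots> = bsum n 2 + bsum n 3"
      unfolding I using supp_bij[where Q="\<lambda>c. c mod 4 = 2 \<or> c mod 4 = 3" and n=n] card_mod4_2[of 2 3 n] by simp
    finally show ?thesis .
  qed
  have neg: "card S = bsum n 1 + bsum n 2" if ns: "negative_seq G m e I"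
  proof -
    have "card S = card {p. finitary01 I p \<and> (card {k. p k \<noteq> 0} mod 4 = 1 \<or> card {k. p k \<noteq> 0} mod 4 = 2)}"
    proof (rule cardS)
      fix p assume fp: "finitary01 I p"
      note h = part4[OF fp ein ac, unfolded Let_def P_card[OF fp]]
      show "(seq_pow G e p \<otimes> seq_pow G e p = m) = (card {k. p k \<noteq> 0} mod 4 = 1 \<or> card {k. p k \<noteq> 0} mod 4 = 2)"
        using h[THEN conjunct2, THEN conjunct2] ns by blast
    qed
    also have "\<dots> = bsum n 1 + bsum n 2"
      unfolding I using supp_bij[where Q="\<lambda>c. c mod 4 = 1 \<or> c mod 4 = 2" and n=n] card_mod4_2[of 1 2 n] by simp
    finally show ?thesis .
  qed
  show ?thesis unfolding Let_def S_def[symmetric] using pos neg by blast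
qed

definition ind :: "nat set \<Rightarrow> nat \<Rightarrow> nat" where "ind A = (\<lambda>n. if n \<in> A then 1 else 0)"

lemma ordprod_ones: "(\<And>n. n < N \<Longrightarrow> f n = \<one>) \<Longrightarrow> ordprod G f N = \<one>"
  by (induction N) auto

lemma seq_pow_zero: "seq_pow G e (\<lambda>_. 0) = \<one>"
  by (subst seq_pow_eq[of 0]) auto

lemma ind_fin: "A \<subseteq> J \<Longrightarrow> finite A \<Longrightarrow> finitary01 J (ind A)"
  unfolding finitary01_def ind_def by auto

lemma seq_pow_ind3:
  assumes "A \<subseteq> {0,1,2}" "\<And>n. n \<in> A \<Longrightarrow> f n \<in> carrier G"
  shows "seq_pow G f (ind A) = ordprod G (\<lambda>n. if n \<in> A then f n else \<one>) 3"
proof -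
  have "seq_pow G f (ind A) = ordprod G (\<lambda>n. f n [^] ind A n) 3"
    by (rule seq_pow_eq) (use assms in \<open>auto simp: ind_def split: if_splits\<close>)
  also have "\<dots> = ordprod G (\<lambda>n. if n \<in> A then f n else \<one>) 3"
    by (rule ordprod_ext) (use assms in \<open>auto simp: ind_def\<close>)
  finally show ?thesis .
qed

lemma seq_pow_single:
  assumes "f j \<in> carrier G"
  shows "seq_pow G f (ind {j}) = f j"
proof -
  have "seq_pow G f (ind {j}) = ordprod G (\<lambda>n. f n [^] ind {j} n) (Suc j)"
    by (rule seq_pow_eq) (use assms in \<open>auto simp: ind_def split: if_splits\<close>)
  also have "\<dots> = ordprod G (\<lambda>n. f n [^] ind {j} n) j \<otimes> f j"
    using assms by (simp add: ind_def)
  also have "ordprod G (\<lambda>n. f n [^] ind {j} n) j = \<one>"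
    by (rule ordprod_ones) (simp add: ind_def)
  finally show ?thesis using assms by simp
qed

lemma not_pm_helper:
  assumes "x \<in> carrier G" "y \<in> carrier G" "x \<otimes> y \<noteq> \<one>" "x \<otimes> y \<noteq> m"
  shows "x \<noteq> y \<and> x \<noteq> m \<otimes> y"
proof
  show "x \<noteq> y" using assms sq[of x] by auto
  show "x \<noteq> m \<otimes> y"
  proof
    assume "x = m \<otimes> y"
    then have "x \<otimes> y = m \<otimes> (y \<otimes> y)" using assms by (simp add: m_assoc)
    then show False using assms sq[of y] mm by auto
  qed
qed

lemma part3:
  assumes J: "seq_index J" and fc: "f ` J \<subseteq> carrier G" and bas: "basic_seq G m f J"
    and L: "\<forall>L. J = {..<L} \<longrightarrow> L \<ge> 2"
    and H: "\<forall>x\<in>generate G (f ` J) - {\<one>, m}. \<forall>y\<in>generate G (f ` J) - {\<one>, m}.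
             x \<noteq> y \<and> x \<noteq> m \<otimes> y \<longrightarrow> x \<otimes> y = m \<otimes> (y \<otimes> x)"
  shows "J = {..<2} \<and> card (generate G (f ` J)) = 8"
proof -
  define gen where "gen = generate G (f ` J)"
  have sub: "subgroup gen G" unfolding gen_def by (rule generate_is_subgroup[OF fc])
  have J01: "0 \<in> J" "1 \<in> J" using J L unfolding seq_index_def by auto
  have fin: "\<forall>n\<in>J. f n \<in> carrier G" using fc by auto
  have ing: "n \<in> J \<Longrightarrow> f n \<in> gen" for n unfolding gen_def by (rule generate.incl) auto
  have nb: "seq_pow G f (ind A) \<noteq> \<one> \<and> seq_pow G f (ind A) \<noteq> m" if hA: "A \<subseteq> J" "A \<noteq> {}" "finite A" for A
  proof -
    obtain x where x: "x \<in> A" using hA(2) by blast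
    have "ind A x \<noteq> 0" using x unfolding ind_def by simp
    then have "ind A \<noteq> (\<lambda>_. 0)" by auto
    then show ?thesis using bas ind_fin[OF hA(1,3)] unfolding basic_seq_def by blast
  qed
  have Hc: "x \<otimes> y = m \<otimes> (y \<otimes> x)"
    if "x \<in> gen" "y \<in> gen" "x \<notin> {\<one>, m}" "y \<notin> {\<one>, m}" "x \<noteq> y" "x \<noteq> m \<otimes> y" for x y
    using H that unfolding gen_def by blast
  have c0: "f 0 \<in> carrier G" and c1: "f 1 \<in> carrier G" using fin J01 by auto
  have v0: "seq_pow G f (ind {0}) = f 0" by (rule seq_pow_single[where f=f and j=0, OF c0])
  have v1: "seq_pow G f (ind {1}) = f 1" by (rule seq_pow_single[where f=f and j=1, OF c1])
  have v01: "seq_pow G f (ind {0,1}) = f 0 \<otimes> f 1"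
    using c0 c1 by (subst seq_pow_ind3) (auto simp: numeral_3_eq_3 numeral_2_eq_2)
  have n0: "f 0 \<noteq> \<one> \<and> f 0 \<noteq> m" using nb[of "{0}"] J01 v0 by auto
  have n1: "f 1 \<noteq> \<one> \<and> f 1 \<noteq> m" using nb[of "{1}"] J01 v1 by auto
  have n01: "f 0 \<otimes> f 1 \<noteq> \<one> \<and> f 0 \<otimes> f 1 \<noteq> m" using nb[of "{0,1}"] J01 v01 by auto
  have a01: "f 0 \<otimes> f 1 = m \<otimes> (f 1 \<otimes> f 0)"
    by (rule Hc) (use ing J01 n0 n1 not_pm_helper[OF c0 c1] n01 in auto)
  have m_gen: "m \<in> gen"
  proof -
    have "m = (f 0 \<otimes> f 1) \<otimes> inv (f 1 \<otimes> f 0)"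
      using a01 c0 c1 by (simp add: m_assoc)
    moreover have "(f 0 \<otimes> f 1) \<otimes> inv (f 1 \<otimes> f 0) \<in> gen"
      using sub ing J01 by (intro subgroup.m_closed subgroup.m_inv_closed) auto
    ultimately show ?thesis by simp
  qed
  have n2: "2 \<notin> J"
  proof
    assume J2: "2 \<in> J"
    have c2: "f 2 \<in> carrier G" using fin J2 by auto
    have v2: "seq_pow G f (ind {2}) = f 2" by (rule seq_pow_single[where f=f and j=2, OF c2])
    have v02: "seq_pow G f (ind {0,2}) = f 0 \<otimes> f 2"
      using c0 c2 by (subst seq_pow_ind3) (auto simp: numeral_3_eq_3 numeral_2_eq_2)
    have v12: "seq_pow G f (ind {1,2}) = f 1 \<otimes> f 2"
      using c1 c2 by (subst seq_pow_ind3) (auto simp: numeral_3_eq_3 numeral_2_eq_2)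
    have v012: "seq_pow G f (ind {0,1,2}) = f 0 \<otimes> f 1 \<otimes> f 2"
      using c0 c1 c2 by (subst seq_pow_ind3) (auto simp: numeral_3_eq_3 numeral_2_eq_2)
    have nn2: "f 2 \<noteq> \<one> \<and> f 2 \<noteq> m" using nb[of "{2}"] J2 v2 by auto
    have n02: "f 0 \<otimes> f 2 \<noteq> \<one> \<and> f 0 \<otimes> f 2 \<noteq> m" using nb[of "{0,2}"] J01 J2 v02 by auto
    have n12: "f 1 \<otimes> f 2 \<noteq> \<one> \<and> f 1 \<otimes> f 2 \<noteq> m" using nb[of "{1,2}"] J01 J2 v12 by auto
    have n012: "f 0 \<otimes> f 1 \<otimes> f 2 \<noteq> \<one> \<and> f 0 \<otimes> f 1 \<otimes> f 2 \<noteq> m"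
      using nb[of "{0,1,2}"] J01 J2 v012 by auto
    have a02: "f 0 \<otimes> f 2 = m \<otimes> (f 2 \<otimes> f 0)"
      by (rule Hc) (use ing J01 J2 n0 nn2 not_pm_helper[OF c0 c2] n02 in auto)
    have a12: "f 1 \<otimes> f 2 = m \<otimes> (f 2 \<otimes> f 1)"
      by (rule Hc) (use ing J01 J2 n1 nn2 not_pm_helper[OF c1 c2] n12 in auto)
    have g01: "f 0 \<otimes> f 1 \<in> gen" using sub ing J01 by (intro subgroup.m_closed) auto
    have a3: "f 0 \<otimes> f 1 \<otimes> f 2 = m \<otimes> (f 2 \<otimes> (f 0 \<otimes> f 1))"
    proof (rule Hc)
      show "f 0 \<otimes> f 1 \<noteq> f 2" "f 0 \<otimes> f 1 \<noteq> m \<otimes> f 2"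
        using not_pm_helper[of "f 0 \<otimes> f 1" "f 2"] c0 c1 c2 n012 by auto
    qed (use g01 ing J2 n01 nn2 in auto)
    have "f 0 \<otimes> f 1 \<otimes> f 2 = f 0 \<otimes> (m \<otimes> (f 2 \<otimes> f 1))" using a12 c0 c1 c2 by (simp add: m_assoc)
    also have "\<dots> = m \<otimes> ((f 0 \<otimes> f 2) \<otimes> f 1)" using c0 c1 c2 m_c[of "f 0"] by (simp add: m_assoc[symmetric])
    also have "\<dots> = m \<otimes> (m \<otimes> (f 2 \<otimes> f 0) \<otimes> f 1)" using a02 by simp
    also have "\<dots> = (m \<otimes> m) \<otimes> (f 2 \<otimes> (f 0 \<otimes> f 1))" using c0 c1 c2 by (simp add: m_assoc)
    also have "\<dots> = f 2 \<otimes> (f 0 \<otimes> f 1)" using c0 c1 c2 mm by simp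
    finally have "f 2 \<otimes> (f 0 \<otimes> f 1) = m \<otimes> (f 2 \<otimes> (f 0 \<otimes> f 1))" using a3 by simp
    then show False using m_ne c0 c1 c2 r_cancel_one'[of "f 2 \<otimes> (f 0 \<otimes> f 1)" m] by simp
  qed
  have J2: "J = {..<2}"
  proof -
    obtain L where "J = {..<L}" using J n2 unfolding seq_index_def by auto
    moreover have "L \<ge> 2" using L calculation by auto
    ultimately show ?thesis using n2 by (metis le_antisym lessThan_iff not_le)
  qed
  define F where "F = {p. finitary01 J p}"
  define XX where "XX = (\<lambda>(a, p). sg a \<otimes> seq_pow G f p) ` ({0, 1} \<times> F)"
  have sgX: "sg a \<otimes> seq_pow G f p \<in> XX" if "p \<in> F" for a p
  proof -
    have "sg a = sg (if even a then 0 else 1)" by (simp add: sgnel_def)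
    then show ?thesis unfolding XX_def using that by force
  qed
  have Xs: "x \<in> XX \<Longrightarrow> \<exists>a p. p \<in> F \<and> x = sg a \<otimes> seq_pow G f p" for x unfolding XX_def by auto
  have genX: "gen \<subseteq> XX"
  proof
    fix x assume "x \<in> gen"
    then show "x \<in> XX" unfolding gen_def
    proof (induction rule: generate.induct)
      case one
      have "\<one> = sg 0 \<otimes> seq_pow G f (\<lambda>_. 0)" by (simp add: seq_pow_zero)
      moreover have "(\<lambda>_. 0) \<in> F" unfolding F_def finitary01_def by auto
      ultimately show ?case using sgX by metis
    next
      case (incl h)
      then obtain j where j: "j \<in> J" "h = f j" by auto
      have "h = sg 0 \<otimes> seq_pow G f (ind {j})" using seq_pow_single[of f j] j fin by simp
      moreover have "ind {j} \<in> F" unfolding F_def using j ind_fin[of "{j}" J] by auto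
      ultimately show ?case using sgX by metis
    next
      case (inv h)
      then obtain j where j: "j \<in> J" "h = f j" by auto
      have cj: "f j \<in> carrier G" using j fin by auto
      obtain c where c: "f j \<otimes> f j = sg c" using sq_sg[OF cj] by blast
      have "inv h = sg c \<otimes> f j" unfolding j(2)
        by (rule inv_equality) (use cj c in \<open>simp_all add: m_assoc sg_sq\<close>)
      also have "\<dots> = sg c \<otimes> seq_pow G f (ind {j})" using seq_pow_single[where f=f and j=j, OF cj] by simp
      finally show ?case using sgX[of "ind {j}" c] j unfolding F_def by (simp add: ind_fin)
    next
      case (eng h1 h2)
      obtain a p where ap: "p \<in> F" "h1 = sg a \<otimes> seq_pow G f p" using Xs[OF eng.IH(1)] by blast
      obtain b q where bq: "q \<in> F" "h2 = sg b \<otimes> seq_pow G f q" using Xs[OF eng.IH(2)] by blast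
      have fp: "finitary01 J p" and fq: "finitary01 J q" using ap bq unfolding F_def by auto
      obtain K where K: "seq_pow G f p \<otimes> seq_pow G f q = sg K \<otimes> seq_pow G f (\<lambda>n. if p n = q n then 0 else 1)"
        using prod_xor[OF fp fq fin] by blast
      have Pc: "seq_pow G f p \<in> carrier G" by (rule seq_pow_in[OF fp fin])
      have Qc: "seq_pow G f q \<in> carrier G" by (rule seq_pow_in[OF fq fin])
      have "h1 \<otimes> h2 = sg a \<otimes> sg b \<otimes> (seq_pow G f p \<otimes> seq_pow G f q)"
        unfolding ap(2) bq(2) using Pc Qc by (simp add: m_assoc sg_c2[of "seq_pow G f p"])
      also have "\<dots> = sg (a + b + K) \<otimes> seq_pow G f (\<lambda>n. if p n = q n then 0 else 1)"
        unfolding K sg_add using xor_fin[OF fp fq] seq_pow_in[OF _ fin] by (simp add: m_assoc)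
      finally show ?case using sgX xor_fin[OF fp fq] unfolding F_def by simp
    qed
  qed
  have Xgen: "XX \<subseteq> gen"
  proof
    fix x assume "x \<in> XX"
    then obtain a p where ap: "p \<in> F" "x = sg a \<otimes> seq_pow G f p" using Xs by blast
    have fp: "finitary01 J p" using ap unfolding F_def by auto
    obtain N where N: "\<forall>n\<ge>N. p n = 0" using fin_bound[OF fp] by blast
    have cp: "p n \<noteq> 0 \<Longrightarrow> f n \<in> carrier G" for n using fin01I[OF fp] fin by auto
    have "seq_pow G f p = ordprod G (\<lambda>n. f n [^] p n) N"
      by (rule seq_pow_eq) (use N cp in auto)
    moreover have "ordprod G (\<lambda>n. f n [^] p n) N' \<in> gen" for N'
    proof (induction N')
      case 0 then show ?case using subgroup.one_closed[OF sub] by simp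
    next
      case (Suc N')
      have "f N' [^] p N' \<in> gen"
      proof (cases "p N' = 0")
        case True then show ?thesis using subgroup.one_closed[OF sub] by simp
      next
        case False
        then have "p N' = 1" "N' \<in> J" using fin01[OF fp, of N'] fin01I[OF fp] by auto
        then show ?thesis using ing[of N'] fin by simp
      qed
      then show ?case using Suc subgroup.m_closed[OF sub] by simp
    qed
    moreover have "sg a \<in> gen" using m_gen subgroup.one_closed[OF sub] unfolding sgnel_def by simp
    ultimately show "x \<in> gen" using ap(2) subgroup.m_closed[OF sub] by simp
  qed
  have inj: "inj_on (\<lambda>(a, p). sg a \<otimes> seq_pow G f p) ({0, 1} \<times> F)"
  proof (rule inj_onI, clarify)
    fix a p b q assume a: "a \<in> {0::int, 1}" "p \<in> F" "b \<in> {0::int, 1}" "q \<in> F"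
      and eq: "sg a \<otimes> seq_pow G f p = sg b \<otimes> seq_pow G f q"
    have "p = q \<and> sg a = sg b" by (rule inj_sg[OF _ _ fin bas eq]) (use a in \<open>auto simp: F_def\<close>)
    then show "a = b \<and> p = q" using a m_ne by (auto simp: sgnel_def)
  qed
  have cF: "card F = 4"
  proof -
    have "card F = card {A. A \<subseteq> {..<2::nat} \<and> True}"
      using supp_bij[where Q = "\<lambda>_. True" and n = 2] unfolding F_def J2 by simp
    also have "\<dots> = card (Pow {..<2::nat})" by (simp add: Pow_def)
    also have "\<dots> = 4" by (simp add: card_Pow)
    finally show ?thesis .
  qed
  have "card gen = card XX" using genX Xgen by auto
  also have "\<dots> = card ({0::int, 1} \<times> F)" unfolding XX_def by (rule card_image[OF inj])
  also have "\<dots> = 8" by (simp add: card_cartesian_product cF)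
  finally show ?thesis using J2 unfolding gen_def by simp
qed

end

theorem lemma3p1:
  fixes G :: "('a, 'b) monoid_scheme" and m :: 'a and e :: "nat \<Rightarrow> 'a" and I :: "nat set"
  assumes sg: "signed_group G m"
    and idx: "seq_index I"
    and ein: "e ` I \<subseteq> carrier G"
    and bas: "basic_seq G m e I"
  shows
   "(\<forall>p q. finitary01 I p \<and> finitary01 I q \<longrightarrow>
      (\<forall>N. (\<forall>n\<ge>N. p n = 0 \<and> q n = 0) \<longrightarrow>
        \<comment> \<open>main identity\<close>
        seq_pow G e p \<otimes>\<^bsub>G\<^esub> seq_pow G e q
          = m [^]\<^bsub>G\<^esub> (\<Sum>j<N. \<Sum>k\<in>{j<..<N}.
               ((1 - comm_fun G (e j) (e k)) div 2) * int (p k) * int (q j))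
            \<otimes>\<^bsub>G\<^esub> seq_pow G e (\<lambda>n. p n + q n)
        \<comment> \<open>(1)\<close>
      \<and> comm_fun G (seq_pow G e p) (seq_pow G e q)
          = neg1pow (((\<Sum>j<N. \<Sum>k<N. comm_fun G (e j) (e k) * int (p k) * int (q j))
                      - (\<Sum>n<N. int (p n)) * (\<Sum>n<N. int (q n))) div 2)
        \<comment> \<open>(2)\<close>
      \<and> (anticomm_seq G m e I \<longrightarrow>
           comm_fun G (seq_pow G e p) (seq_pow G e q)
             = neg1pow ((\<Sum>n<N. int (p n)) * (\<Sum>n<N. int (q n)) - (\<Sum>n<N. int (p n * q n))))))
   \<and> \<comment> \<open>(4)\<close>
   (\<forall>p. finitary01 I p \<and> anticomm_seq G m e I \<longrightarrow>
      (let P = (\<Sum>n\<in>{n. p n \<noteq> 0}. p n) in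
        seq_pow G e p \<otimes>\<^bsub>G\<^esub> seq_pow G e p
          = seq_pow G e (\<lambda>n. 2 * p n) \<otimes>\<^bsub>G\<^esub> m [^]\<^bsub>G\<^esub> (P * (P - 1) div 2)
        \<and> (positive_seq G e I \<longrightarrow>
             (seq_pow G e p \<otimes>\<^bsub>G\<^esub> seq_pow G e p = m \<longleftrightarrow> P mod 4 = 2 \<or> P mod 4 = 3))
        \<and> (negative_seq G m e I \<longrightarrow>
             (seq_pow G e p \<otimes>\<^bsub>G\<^esub> seq_pow G e p = m \<longleftrightarrow> P mod 4 = 2 \<or> P mod 4 = 1))))
   \<and> \<comment> \<open>(5)\<close>
   (\<forall>n. I = {..<n} \<and> anticomm_seq G m e I \<longrightarrow>
      (let S = {x. (\<exists>p. finitary01 I p \<and> x = seq_pow G e p) \<and> x \<otimes>\<^bsub>G\<^esub> x = m} in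
        (positive_seq G e I \<longrightarrow> card S = bsum n 2 + bsum n 3)
        \<and> (negative_seq G m e I \<longrightarrow> card S = bsum n 1 + bsum n 2)))
   \<and> \<comment> \<open>(3)\<close>
   (\<forall>(f :: nat \<Rightarrow> 'a) J. seq_index J \<and> f ` J \<subseteq> carrier G \<and> basic_seq G m f J
       \<and> (\<forall>L. J = {..<L} \<longrightarrow> L \<ge> 2)
       \<and> (\<forall>x\<in>generate G (f ` J) - {\<one>\<^bsub>G\<^esub>, m}. \<forall>y\<in>generate G (f ` J) - {\<one>\<^bsub>G\<^esub>, m}.
             x \<noteq> y \<and> x \<noteq> m \<otimes>\<^bsub>G\<^esub> y \<longrightarrow> x \<otimes>\<^bsub>G\<^esub> y = m \<otimes>\<^bsub>G\<^esub> (y \<otimes>\<^bsub>G\<^esub> x))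
     \<longrightarrow> J = {..<2} \<and> card (generate G (f ` J)) = 8)"
  proof -
  interpret sgrp G m using sgrpI[OF sg] .
  have ein': "\<forall>n\<in>I. e n \<in> carrier G" using ein by auto
  have A: "\<forall>p q. finitary01 I p \<and> finitary01 I q \<longrightarrow>
      (\<forall>N. (\<forall>n\<ge>N. p n = 0 \<and> q n = 0) \<longrightarrow>
        seq_pow G e p \<otimes>\<^bsub>G\<^esub> seq_pow G e q
          = m [^]\<^bsub>G\<^esub> (\<Sum>j<N. \<Sum>k\<in>{j<..<N}.
               ((1 - comm_fun G (e j) (e k)) div 2) * int (p k) * int (q j))
            \<otimes>\<^bsub>G\<^esub> seq_pow G e (\<lambda>n. p n + q n)
      \<and> comm_fun G (seq_pow G e p) (seq_pow G e q)
          = neg1pow (((\<Sum>j<N. \<Sum>k<N. comm_fun G (e j) (e k) * int (p k) * int (q j))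
                      - (\<Sum>n<N. int (p n)) * (\<Sum>n<N. int (q n))) div 2)
      \<and> (anticomm_seq G m e I \<longrightarrow>
           comm_fun G (seq_pow G e p) (seq_pow G e q)
             = neg1pow ((\<Sum>n<N. int (p n)) * (\<Sum>n<N. int (q n)) - (\<Sum>n<N. int (p n * q n)))))"
  proof (intro allI impI conjI)
    fix p q N
    assume pq: "finitary01 I p \<and> finitary01 I q" and N: "\<forall>n\<ge>N. p n = 0 \<and> q n = 0"
    then have p: "finitary01 I p" and q: "finitary01 I q" by auto
    show "seq_pow G e p \<otimes>\<^bsub>G\<^esub> seq_pow G e q
          = m [^]\<^bsub>G\<^esub> (\<Sum>j<N. \<Sum>k\<in>{j<..<N}.
               ((1 - comm_fun G (e j) (e k)) div 2) * int (p k) * int (q j))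
            \<otimes>\<^bsub>G\<^esub> seq_pow G e (\<lambda>n. p n + q n)"
      unfolding m_int_pow by (rule main_id[OF p q N ein'])
    show "comm_fun G (seq_pow G e p) (seq_pow G e q)
          = neg1pow (((\<Sum>j<N. \<Sum>k<N. comm_fun G (e j) (e k) * int (p k) * int (q j))
                      - (\<Sum>n<N. int (p n)) * (\<Sum>n<N. int (q n))) div 2)"
      by (rule part1[OF p q N ein'])
    assume ac: "anticomm_seq G m e I"
    show "comm_fun G (seq_pow G e p) (seq_pow G e q)
             = neg1pow ((\<Sum>n<N. int (p n)) * (\<Sum>n<N. int (q n)) - (\<Sum>n<N. int (p n * q n)))"
      by (rule part2[OF p q N ein' ac])
  qed
  have B: "\<forall>p. finitary01 I p \<and> anticomm_seq G m e I \<longrightarrow>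
      (let P = (\<Sum>n\<in>{n. p n \<noteq> 0}. p n) in
        seq_pow G e p \<otimes>\<^bsub>G\<^esub> seq_pow G e p
          = seq_pow G e (\<lambda>n. 2 * p n) \<otimes>\<^bsub>G\<^esub> m [^]\<^bsub>G\<^esub> (P * (P - 1) div 2)
        \<and> (positive_seq G e I \<longrightarrow>
             (seq_pow G e p \<otimes>\<^bsub>G\<^esub> seq_pow G e p = m \<longleftrightarrow> P mod 4 = 2 \<or> P mod 4 = 3))
        \<and> (negative_seq G m e I \<longrightarrow>
             (seq_pow G e p \<otimes>\<^bsub>G\<^esub> seq_pow G e p = m \<longleftrightarrow> P mod 4 = 2 \<or> P mod 4 = 1)))"
    using part4 ein' by blast
  have C: "\<forall>n. I = {..<n} \<and> anticomm_seq G m e I \<longrightarrow>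
      (let S = {x. (\<exists>p. finitary01 I p \<and> x = seq_pow G e p) \<and> x \<otimes>\<^bsub>G\<^esub> x = m} in
        (positive_seq G e I \<longrightarrow> card S = bsum n 2 + bsum n 3)
        \<and> (negative_seq G m e I \<longrightarrow> card S = bsum n 1 + bsum n 2))"
    using part5 ein' bas by blast
  have D: "\<forall>(f :: nat \<Rightarrow> 'a) J. seq_index J \<and> f ` J \<subseteq> carrier G \<and> basic_seq G m f J
       \<and> (\<forall>L. J = {..<L} \<longrightarrow> L \<ge> 2)
       \<and> (\<forall>x\<in>generate G (f ` J) - {\<one>\<^bsub>G\<^esub>, m}. \<forall>y\<in>generate G (f ` J) - {\<one>\<^bsub>G\<^esub>, m}.
             x \<noteq> y \<and> x \<noteq> m \<otimes>\<^bsub>G\<^esub> y \<longrightarrow> x \<otimes>\<^bsub>G\<^esub> y = m \<otimes>\<^bsub>G\<^esub> (y \<otimes>\<^bsub>G\<^esub> x))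
     \<longrightarrow> J = {..<2} \<and> card (generate G (f ` J)) = 8"
  proof (intro allI impI)
    fix f :: "nat \<Rightarrow> 'a" and J
    assume h: "seq_index J \<and> f ` J \<subseteq> carrier G \<and> basic_seq G m f J
       \<and> (\<forall>L. J = {..<L} \<longrightarrow> L \<ge> 2)
       \<and> (\<forall>x\<in>generate G (f ` J) - {\<one>\<^bsub>G\<^esub>, m}. \<forall>y\<in>generate G (f ` J) - {\<one>\<^bsub>G\<^esub>, m}.
             x \<noteq> y \<and> x \<noteq> m \<otimes>\<^bsub>G\<^esub> y \<longrightarrow> x \<otimes>\<^bsub>G\<^esub> y = m \<otimes>\<^bsub>G\<^esub> (y \<otimes>\<^bsub>G\<^esub> x))"
    show "J = {..<2} \<and> card (generate G (f ` J)) = 8"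
      by (rule part3) (use h in auto)
  qed
  show ?thesis using A B C D by blast
qed

end
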